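(* Let $D\ge1$ and let $\mathcal{F}$ be a collection of pairwise non-overlapping $D$-simplices on $\gamma_D$ whose vertex sets have union exactly a set of $n$ points, and suppose $\mathcal{F}$ is non-extendable. Then there is a collection $\mathcal{F}'$ of pairwise non-overlapping $(D+1)$-simplices on $\gamma_{D+1}$ whose vertex sets have union a set of exactly $n+1$ points of $\gamma_{D+1}$, such that $\mathcal{F}'$ is non-extendable.
   Context: $\gamma_D=\{(t,t^2,\dots,t^D):t\in\mathbb{R}\}$. A $D$-simplex on $\gamma_D$ is $\mathrm{conv}(\sigma)$ for $\sigma\subseteq\gamma_D$, $|\sigma|=D+1$. Simplices overlap if $\mathrm{conv}(\sigma)\cap\mathrm{conv}(\tau)\supsetneq\mathrm{conv}(\sigma\cap\tau)$. A collection of simplices on $\gamma_D$ whose vertex sets have union $A$ is non-extendable if there is no triangulation of $\mathrm{conv}(A)$ all of whose vertices lie in $A$ and which contains every simplex of the collection. *)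

theory Defs
  imports "HOL-Analysis.Analysis"
begin

text \<open>Points of R^D are modelled as functions nat => real whose coordinates
  1..D are meaningful (all others are 0). A point of the moment curve gamma_D
  is identified with its parameter t.\<close>

definition moment :: "nat \<Rightarrow> real \<Rightarrow> (nat \<Rightarrow> real)" where
  "moment D t = (\<lambda>i. if 1 \<le> i \<and> i \<le> D then t ^ i else 0)"

definition conv_mc :: "nat \<Rightarrow> real set \<Rightarrow> (nat \<Rightarrow> real) set" where
  "conv_mc D P = {(\<lambda>i. \<Sum>t\<in>P. u t * moment D t i) | u.
      (\<forall>t\<in>P. 0 \<le> u t) \<and> (\<Sum>t\<in>P. u t) = 1}"

definition is_simplex :: "nat \<Rightarrow> real set \<Rightarrow> bool" where
  "is_simplex D \<sigma> \<longleftrightarrow> finite \<sigma> \<and> card \<sigma> = D + 1"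

definition overlap :: "nat \<Rightarrow> real set \<Rightarrow> real set \<Rightarrow> bool" where
  "overlap D \<sigma> \<tau> \<longleftrightarrow> conv_mc D (\<sigma> \<inter> \<tau>) \<subset> conv_mc D \<sigma> \<inter> conv_mc D \<tau>"

definition pairwise_nonoverlapping :: "nat \<Rightarrow> real set set \<Rightarrow> bool" where
  "pairwise_nonoverlapping D F \<longleftrightarrow>
     (\<forall>\<sigma>\<in>F. \<forall>\<tau>\<in>F. \<sigma> \<noteq> \<tau> \<longrightarrow> \<not> overlap D \<sigma> \<tau>)"

definition triangulation :: "nat \<Rightarrow> real set \<Rightarrow> real set set \<Rightarrow> bool" where
  "triangulation D A T \<longleftrightarrow> finite T \<and> (\<forall>\<sigma>\<in>T. is_simplex D \<sigma> \<and> \<sigma> \<subseteq> A)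
     \<and> pairwise_nonoverlapping D T \<and> (\<Union>\<sigma>\<in>T. conv_mc D \<sigma>) = conv_mc D A"

definition non_extendable :: "nat \<Rightarrow> real set set \<Rightarrow> bool" where
  "non_extendable D F \<longleftrightarrow> \<not> (\<exists>T. triangulation D (\<Union>F) T \<and> F \<subseteq> T)"

end

theory Submission imports Defs "HOL-Computational_Algebra.Polynomial" begin

lemma conv_support:
  assumes "y \<in> conv_mc D P" "i = 0 \<or> i > D" shows "y i = 0"
  using assms by (auto simp: conv_mc_def moment_def)

lemma conv_mono:
  assumes "finite Q" "P \<subseteq> Q" shows "conv_mc D P \<subseteq> conv_mc D Q"
proof
  fix x assume "x \<in> conv_mc D P"
  then obtain u where x: "x = (\<lambda>i. \<Sum>t\<in>P. u t * moment D t i)" and u: "\<forall>t\<in>P. 0 \<le> u t" "(\<Sum>t\<in>P. u t) = 1"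
    by (auto simp: conv_mc_def)
  define v where "v t = (if t \<in> P then u t else 0)" for t
  have e: "(\<Sum>t\<in>Q. v t * g t) = (\<Sum>t\<in>P. u t * g t)" for g :: "real \<Rightarrow> real"
  proof -
    have "(\<Sum>t\<in>Q. v t * g t) = (\<Sum>t\<in>Q. if t \<in> P then u t * g t else 0)"
      by (rule sum.cong) (auto simp: v_def)
    also have "\<dots> = (\<Sum>t\<in>Q \<inter> P. u t * g t)" using assms(1) by (simp add: sum.inter_restrict)
    also have "Q \<inter> P = P" using assms(2) by auto
    finally show ?thesis .
  qed
  have "x = (\<lambda>i. \<Sum>t\<in>Q. v t * moment D t i)" using e x by simp
  moreover have "(\<Sum>t\<in>Q. v t) = 1" using e[of "\<lambda>_. 1"] u by simp
  moreover have "\<forall>t\<in>Q. 0 \<le> v t" using u by (auto simp: v_def)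
  ultimately show "x \<in> conv_mc D Q" by (auto simp: conv_mc_def)
qed

lemma not_overlap_iff:
  assumes "finite a" "finite b"
  shows "\<not> overlap D a b \<longleftrightarrow> conv_mc D a \<inter> conv_mc D b \<subseteq> conv_mc D (a \<inter> b)"
proof -
  have "conv_mc D (a \<inter> b) \<subseteq> conv_mc D a \<inter> conv_mc D b"
    using conv_mono[of a "a \<inter> b" D] conv_mono[of b "a \<inter> b" D] assms by auto
  then show ?thesis unfolding overlap_def by auto
qed

lemma conv_first_le:
  assumes "y \<in> conv_mc (Suc D) P" "\<forall>t\<in>P. t \<le> b" shows "y 1 \<le> b"
proof -
  obtain c where y: "y = (\<lambda>i. \<Sum>t\<in>P. c t * moment (Suc D) t i)" and c: "\<forall>t\<in>P. 0 \<le> c t" "(\<Sum>t\<in>P. c t) = 1"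
    using assms(1) by (auto simp: conv_mc_def)
  have "y 1 = (\<Sum>t\<in>P. c t * t)" using y by (simp add: moment_def)
  also have "\<dots> \<le> (\<Sum>t\<in>P. c t * b)" using c assms(2) by (intro sum_mono mult_left_mono) auto
  also have "\<dots> = b" using c by (simp add: sum_distrib_right[symmetric])
  finally show ?thesis .
qed

definition phi :: "nat \<Rightarrow> real \<Rightarrow> real \<Rightarrow> (nat \<Rightarrow> real) \<Rightarrow> (nat \<Rightarrow> real)" where
  "phi D s e y = (\<lambda>k. if 1 \<le> k \<and> k \<le> D then (s * y k - y (Suc k)) / e else 0)"

lemma phi_comb:
  "phi D s e (\<lambda>i. \<Sum>t\<in>P. c t * moment (Suc D) t i) = (\<lambda>k. \<Sum>t\<in>P. (c t * (s - t) / e) * moment D t k)"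
proof
  fix k
  show "phi D s e (\<lambda>i. \<Sum>t\<in>P. c t * moment (Suc D) t i) k = (\<Sum>t\<in>P. (c t * (s - t) / e) * moment D t k)"
  proof (cases "1 \<le> k \<and> k \<le> D")
    case True
    then have "phi D s e (\<lambda>i. \<Sum>t\<in>P. c t * moment (Suc D) t i) k = (s * (\<Sum>t\<in>P. c t * t^k) - (\<Sum>t\<in>P. c t * t^(Suc k))) / e"
      by (simp add: phi_def moment_def)
    also have "\<dots> = (\<Sum>t\<in>P. (c t * (s - t) / e) * t^k)"
      by (simp add: sum_distrib_left sum_subtractf[symmetric] sum_divide_distrib algebra_simps)
    finally show ?thesis using True by (simp add: moment_def)
  qed (auto simp: phi_def moment_def)
qed


lemma recover:
  assumes "finite P" "s \<in> P" "\<forall>t\<in>P. t \<le> s" "e > 0" "y \<in> conv_mc (Suc D) P" "y 1 = s - e"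
  shows "phi D s e y \<in> conv_mc D (P - {s})"
proof -
  obtain c where y: "y = (\<lambda>i. \<Sum>t\<in>P. c t * moment (Suc D) t i)" and c: "\<forall>t\<in>P. 0 \<le> c t" "(\<Sum>t\<in>P. c t) = 1"
    using assms(5) by (auto simp: conv_mc_def)
  define l where "l t = c t * (s - t) / e" for t
  have y1: "y 1 = (\<Sum>t\<in>P. c t * t)" using y by (simp add: moment_def)
  have sP: "(\<Sum>t\<in>P - {s}. g t) = (\<Sum>t\<in>P. g t)" if "g s = 0" for g :: "real \<Rightarrow> real"
    using that assms(1,2) by (simp add: sum.remove)
  have "(\<Sum>t\<in>P. l t) = (\<Sum>t\<in>P. (c t * s - c t * t) / e)"
    by (simp add: l_def right_diff_distrib)
  also have "\<dots> = (\<Sum>t\<in>P. (c t * s - c t * t)) / e" by (simp add: sum_divide_distrib)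
  also have "\<dots> = ((\<Sum>t\<in>P. c t) * s - (\<Sum>t\<in>P. c t * t)) / e" by (simp add: sum_subtractf sum_distrib_right)
  also have "\<dots> = 1" using c y1 assms(6,4) by simp
  finally have l1: "(\<Sum>t\<in>P - {s}. l t) = 1" using sP[of l] by (simp add: l_def)
  have "phi D s e y = (\<lambda>k. \<Sum>t\<in>P. l t * moment D t k)" unfolding y phi_comb l_def by simp
  also have "\<dots> = (\<lambda>k. \<Sum>t\<in>P - {s}. l t * moment D t k)"
    by (rule ext, rule sP[symmetric]) (simp add: l_def)
  finally have "phi D s e y = (\<lambda>k. \<Sum>t\<in>P - {s}. l t * moment D t k)" .
  moreover have "\<forall>t\<in>P - {s}. 0 \<le> l t" using c assms(3,4) by (auto simp: l_def)
  ultimately show ?thesis using l1 by (auto simp: conv_mc_def)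
qed

lemma lift:
  assumes "finite P" "s \<notin> P" "\<forall>t\<in>P. t \<le> s - 1" "0 < e" "e \<le> 1" "x \<in> conv_mc D P"
  shows "\<exists>y. y \<in> conv_mc (Suc D) (insert s P) \<and> y 1 = s - e \<and> phi D s e y = x"
proof -
  obtain u where x: "x = (\<lambda>i. \<Sum>t\<in>P. u t * moment D t i)" and u: "\<forall>t\<in>P. 0 \<le> u t" "(\<Sum>t\<in>P. u t) = 1"
    using assms(6) by (auto simp: conv_mc_def)
  define a where "a t = e * u t / (s - t)" for t
  define c where "c t = (if t = s then 1 - (\<Sum>t\<in>P. a t) else a t)" for t
  define y where "y = (\<lambda>i. \<Sum>t\<in>insert s P. c t * moment (Suc D) t i)"
  have pos: "t \<in> P \<Longrightarrow> s - t \<ge> 1" for t using assms(3) by auto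
  have a0: "t \<in> P \<Longrightarrow> 0 \<le> a t" for t using u pos[of t] assms(4) by (auto simp: a_def)
  have ale: "t \<in> P \<Longrightarrow> a t \<le> u t" for t
  proof -
    assume t: "t \<in> P"
    have "a t = (e / (s - t)) * u t" by (simp add: a_def)
    also have "\<dots> \<le> 1 * u t"
      using pos[OF t] assms(4,5) u t by (intro mult_right_mono) (auto simp: divide_le_eq)
    finally show ?thesis by simp
  qed
  have "(\<Sum>t\<in>P. a t) \<le> (\<Sum>t\<in>P. u t)" using ale by (intro sum_mono) auto
  then have c0: "\<forall>t\<in>insert s P. 0 \<le> c t" using a0 u by (auto simp: c_def)
  have sI: "(\<Sum>t\<in>insert s P. g t) = g s + (\<Sum>t\<in>P. g t)" for g :: "real \<Rightarrow> real"
    using assms(1,2) by simp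
  have cP: "(\<Sum>t\<in>P. c t * g t) = (\<Sum>t\<in>P. a t * g t)" for g :: "real \<Rightarrow> real"
    using assms(2) by (intro sum.cong) (auto simp: c_def)
  have c1: "(\<Sum>t\<in>insert s P. c t) = 1" using sI[of c] cP[of "\<lambda>_. 1"] by (simp add: c_def)
  have "y 1 = c s * s + (\<Sum>t\<in>P. a t * t)" using sI cP by (simp add: y_def moment_def)
  also have "\<dots> = s - (\<Sum>t\<in>P. a t * (s - t))"
    by (simp add: c_def algebra_simps sum_subtractf sum_distrib_right sum_distrib_left)
  also have "(\<Sum>t\<in>P. a t * (s - t)) = (\<Sum>t\<in>P. e * u t)"
  proof (intro sum.cong refl)
    fix t assume "t \<in> P"
    then have "s - t \<noteq> 0" using pos[of t] by simp
    then show "a t * (s - t) = e * u t" by (simp add: a_def)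
  qed
  also have "\<dots> = e" using u by (simp add: sum_distrib_left[symmetric])
  finally have y1: "y 1 = s - e" .
  have "phi D s e y = (\<lambda>k. \<Sum>t\<in>insert s P. (c t * (s - t) / e) * moment D t k)"
    unfolding y_def phi_comb by simp
  also have "\<dots> = (\<lambda>k. \<Sum>t\<in>P. (a t * (s - t) / e) * moment D t k)"
  proof
    fix k
    have "(\<Sum>t\<in>insert s P. (c t * (s - t) / e) * moment D t k) = (\<Sum>t\<in>P. (c t * (s - t) / e) * moment D t k)"
      using sI by simp
    also have "\<dots> = (\<Sum>t\<in>P. (a t * (s - t) / e) * moment D t k)"
      using assms(2) by (intro sum.cong) (auto simp: c_def)
    finally show "(\<Sum>t\<in>insert s P. (c t * (s - t) / e) * moment D t k) = (\<Sum>t\<in>P. (a t * (s - t) / e) * moment D t k)" .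
  qed
  also have "\<dots> = x" unfolding x
  proof (intro ext sum.cong refl)
    fix k t assume "t \<in> P"
    then have "s - t \<noteq> 0" using pos[of t] by simp
    then show "a t * (s - t) / e * moment D t k = u t * moment D t k"
      using assms(4) by (simp add: a_def)
  qed
  finally have "phi D s e y = x" .
  moreover have "y \<in> conv_mc (Suc D) (insert s P)" using c0 c1 by (auto simp: conv_mc_def y_def)
  ultimately show ?thesis using y1 by blast
qed

lemma determ:
  assumes "y \<in> conv_mc (Suc D) P" "y' \<in> conv_mc (Suc D) Q" "y 1 = y' 1" "phi D s e y = phi D s e y'" "e \<noteq> 0"
  shows "y = y'"
proof -
  have "\<forall>k. 1 \<le> k \<and> k \<le> Suc D \<longrightarrow> y k = y' k"
  proof (intro allI)
    fix k show "1 \<le> k \<and> k \<le> Suc D \<longrightarrow> y k = y' k"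
    proof (induction k)
      case 0 then show ?case by simp
    next
      case (Suc k)
      show ?case
      proof (cases "k = 0")
        case True then show ?thesis using assms(3) by simp
      next
        case False
        show ?thesis
        proof
          assume h: "1 \<le> Suc k \<and> Suc k \<le> Suc D"
          then have yk: "y k = y' k" using Suc False by simp
          have "phi D s e y k = phi D s e y' k" using assms(4) by simp
          then have "(s * y k - y (Suc k)) / e = (s * y' k - y' (Suc k)) / e"
            using h False by (simp add: phi_def)
          then show "y (Suc k) = y' (Suc k)" using yk assms(5) by (simp add: divide_cancel_right)
        qed
      qed
    qed
  qed
  then show ?thesis
    using conv_support[OF assms(1)] conv_support[OF assms(2)]
    by (intro ext) (metis le_less_linear less_one not_le)
qed

lemma vandermonde_unique:
  assumes "finite P" "card P \<le> Suc K" "\<forall>k\<le>K. (\<Sum>t\<in>P. w t * t ^ k) = (0::real)" "t0 \<in> P"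
  shows "w t0 = 0"
proof -
  define p where "p = (\<Prod>t\<in>P - {t0}. [:-t, 1:])"
  have "degree p \<le> (\<Sum>t\<in>P - {t0}. 1)"
    unfolding p_def using degree_prod_sum_le[of "P - {t0}" "\<lambda>t. [:-t, 1:]"] assms(1) by (simp add: o_def)
  also have "\<dots> = card P - 1" using assms by simp
  finally have dg: "degree p \<le> K" using assms(2) by simp
  have "(\<Sum>t\<in>P. w t * poly p t) = (\<Sum>t\<in>P. \<Sum>i\<le>degree p. coeff p i * (w t * t ^ i))"
    by (intro sum.cong refl) (simp add: poly_altdef sum_distrib_left mult_ac)
  also have "\<dots> = (\<Sum>i\<le>degree p. coeff p i * (\<Sum>t\<in>P. w t * t ^ i))"
    by (subst sum.swap) (simp add: sum_distrib_left)
  also have "\<dots> = 0" using assms(3) dg by simp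
  finally have z: "(\<Sum>t\<in>P. w t * poly p t) = 0" .
  have pz: "t \<in> P - {t0} \<Longrightarrow> poly p t = 0" for t
    using assms(1) by (auto simp: p_def poly_prod)
  have "(\<Sum>t\<in>P. w t * poly p t) = w t0 * poly p t0 + (\<Sum>t\<in>P - {t0}. w t * poly p t)"
    using assms(1,4) by (simp add: sum.remove)
  also have "(\<Sum>t\<in>P - {t0}. w t * poly p t) = 0" using pz by simp
  finally have "w t0 * poly p t0 = 0" using z by simp
  moreover have "poly p t0 \<noteq> 0" using assms(1) by (auto simp: p_def poly_prod)
  ultimately show ?thesis by simp
qed


lemma nonov_cone:
  assumes f1: "finite \<sigma>1" and f2: "finite \<sigma>2" and c1: "card \<sigma>1 = Suc D"
    and s1: "s \<notin> \<sigma>1" and s2: "s \<notin> \<sigma>2" and lt: "\<forall>t\<in>\<sigma>1 \<union> \<sigma>2. t < s"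
    and nov: "conv_mc D \<sigma>1 \<inter> conv_mc D \<sigma>2 \<subseteq> conv_mc D (\<sigma>1 \<inter> \<sigma>2)"
  shows "conv_mc (Suc D) (insert s \<sigma>1) \<inter> conv_mc (Suc D) (insert s \<sigma>2) \<subseteq> conv_mc (Suc D) (insert s (\<sigma>1 \<inter> \<sigma>2))"
proof
  fix y assume y12: "y \<in> conv_mc (Suc D) (insert s \<sigma>1) \<inter> conv_mc (Suc D) (insert s \<sigma>2)"
  then have yA: "y \<in> conv_mc (Suc D) (insert s \<sigma>1)" and yB: "y \<in> conv_mc (Suc D) (insert s \<sigma>2)" by auto
  obtain c where y: "y = (\<lambda>i. \<Sum>t\<in>insert s \<sigma>1. c t * moment (Suc D) t i)"
    and c: "\<forall>t\<in>insert s \<sigma>1. 0 \<le> c t" "(\<Sum>t\<in>insert s \<sigma>1. c t) = 1"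
    using yA by (auto simp: conv_mc_def)
  define d where "d = s - y 1"
  have y1: "y 1 = (\<Sum>t\<in>insert s \<sigma>1. c t * t)" using y by (simp add: moment_def)
  have sd: "(\<Sum>t\<in>insert s \<sigma>1. c t * (s - t)) = d"
  proof -
    have "(\<Sum>t\<in>insert s \<sigma>1. c t * (s - t)) = (\<Sum>t\<in>insert s \<sigma>1. c t * s - c t * t)"
      by (simp add: right_diff_distrib)
    also have "\<dots> = (\<Sum>t\<in>insert s \<sigma>1. c t) * s - (\<Sum>t\<in>insert s \<sigma>1. c t * t)"
      by (simp add: sum_subtractf sum_distrib_right)
    also have "\<dots> = d" using c(2) y1 by (simp add: d_def)
    finally show ?thesis .
  qed
  have nn: "\<forall>t\<in>insert s \<sigma>1. 0 \<le> c t * (s - t)"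
  proof
    fix t assume t: "t \<in> insert s \<sigma>1"
    then have "t \<le> s" using lt by (cases "t = s") (auto intro: less_imp_le)
    moreover have "0 \<le> c t" using c t by auto
    ultimately show "0 \<le> c t * (s - t)" by simp
  qed
  have "0 \<le> (\<Sum>t\<in>insert s \<sigma>1. c t * (s - t))" using nn by (intro sum_nonneg) blast
  then have d0: "d \<ge> 0" using sd by simp
  have cz: "\<forall>t\<in>\<sigma>1 - \<sigma>2. c t = 0"
  proof (cases "d = 0")
    case True
    then have z: "(\<Sum>t\<in>insert s \<sigma>1. c t * (s - t)) = 0" using sd by simp
    have "finite (insert s \<sigma>1)" using f1 by simp
    then have "\<forall>t\<in>insert s \<sigma>1. c t * (s - t) = 0"
      using sum_nonneg_eq_0_iff[of "insert s \<sigma>1" "\<lambda>t. c t * (s - t)"] nn z by blast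
    show ?thesis
    proof
      fix t assume t: "t \<in> \<sigma>1 - \<sigma>2"
      then have "c t * (s - t) = 0" using \<open>\<forall>t\<in>insert s \<sigma>1. c t * (s - t) = 0\<close> by blast
      moreover have "s - t \<noteq> 0" using lt t by force
      ultimately show "c t = 0" by simp
    qed
  next
    case False
    then have dp: "d > 0" using d0 by simp
    have le0: "\<forall>t\<in>\<sigma>1 \<union> \<sigma>2. t \<le> s"
    proof
      fix t assume "t \<in> \<sigma>1 \<union> \<sigma>2"
      then have "t < s" using lt by blast
      then show "t \<le> s" by simp
    qed
    have le: "\<forall>t\<in>insert s \<sigma>1. t \<le> s" "\<forall>t\<in>insert s \<sigma>2. t \<le> s" using le0 by auto
    have "phi D s d y \<in> conv_mc D (insert s \<sigma>1 - {s})"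
      by (rule recover) (use f1 le dp yA in \<open>auto simp: d_def\<close>)
    moreover have "phi D s d y \<in> conv_mc D (insert s \<sigma>2 - {s})"
      by (rule recover) (use f2 le dp yB in \<open>auto simp: d_def\<close>)
    ultimately have "phi D s d y \<in> conv_mc D (\<sigma>1 \<inter> \<sigma>2)" using nov s1 s2 by auto
    then obtain u where xu: "phi D s d y = (\<lambda>i. \<Sum>t\<in>\<sigma>1 \<inter> \<sigma>2. u t * moment D t i)"
      and u: "(\<Sum>t\<in>\<sigma>1 \<inter> \<sigma>2. u t) = 1"
      by (auto simp: conv_mc_def)
    define l where "l t = c t * (s - t) / d" for t
    have "phi D s d y = (\<lambda>k. \<Sum>t\<in>insert s \<sigma>1. l t * moment D t k)"
      unfolding y phi_comb l_def by simp
    also have "\<dots> = (\<lambda>k. \<Sum>t\<in>\<sigma>1. l t * moment D t k)"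
      using f1 s1 by (simp add: l_def)
    finally have xl: "phi D s d y = (\<lambda>k. \<Sum>t\<in>\<sigma>1. l t * moment D t k)" .
    have l1: "(\<Sum>t\<in>\<sigma>1. l t) = 1"
    proof -
      have "(\<Sum>t\<in>\<sigma>1. l t) = (\<Sum>t\<in>insert s \<sigma>1. l t)" using f1 s1 by (simp add: l_def)
      also have "\<dots> = (\<Sum>t\<in>insert s \<sigma>1. c t * (s - t)) / d" by (simp add: l_def sum_divide_distrib)
      also have "\<dots> = 1" using sd dp by simp
      finally show ?thesis .
    qed
    define w where "w t = l t - (if t \<in> \<sigma>2 then u t else 0)" for t
    have rs: "(\<Sum>t\<in>\<sigma>1. (if t \<in> \<sigma>2 then u t else 0) * g t) = (\<Sum>t\<in>\<sigma>1 \<inter> \<sigma>2. u t * g t)" for g :: "real \<Rightarrow> real"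
    proof -
      have "(\<Sum>t\<in>\<sigma>1. (if t \<in> \<sigma>2 then u t else 0) * g t) = (\<Sum>t\<in>\<sigma>1. if t \<in> \<sigma>2 then u t * g t else 0)"
        by (intro sum.cong) auto
      also have "\<dots> = (\<Sum>t\<in>\<sigma>1 \<inter> \<sigma>2. u t * g t)" using f1 by (simp add: sum.inter_restrict)
      finally show ?thesis .
    qed
    have W: "\<forall>k\<le>D. (\<Sum>t\<in>\<sigma>1. w t * t ^ k) = 0"
    proof (intro allI impI)
      fix k assume k: "k \<le> D"
      have "(\<Sum>t\<in>\<sigma>1. w t * t ^ k) = (\<Sum>t\<in>\<sigma>1. l t * t ^ k) - (\<Sum>t\<in>\<sigma>1 \<inter> \<sigma>2. u t * t ^ k)"
      proof -
        have "(\<Sum>t\<in>\<sigma>1. w t * t ^ k) = (\<Sum>t\<in>\<sigma>1. l t * t ^ k - (if t \<in> \<sigma>2 then u t else 0) * t ^ k)"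
          by (simp add: w_def left_diff_distrib)
        also have "\<dots> = (\<Sum>t\<in>\<sigma>1. l t * t ^ k) - (\<Sum>t\<in>\<sigma>1. (if t \<in> \<sigma>2 then u t else 0) * t ^ k)"
          by (rule sum_subtractf)
        finally show ?thesis using rs[of "\<lambda>t. t ^ k"] by simp
      qed
      also have "\<dots> = 0"
      proof (cases "k = 0")
        case True then show ?thesis using l1 u by simp
      next
        case False
        have "(\<Sum>t\<in>\<sigma>1. l t * moment D t k) = (\<Sum>t\<in>\<sigma>1 \<inter> \<sigma>2. u t * moment D t k)"
          using fun_cong[OF trans[OF xl[symmetric] xu], of k] by simp
        then show ?thesis using False k by (simp add: moment_def)
      qed
      finally show "(\<Sum>t\<in>\<sigma>1. w t * t ^ k) = 0" .
    qed
    show ?thesis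
    proof
      fix t assume t: "t \<in> \<sigma>1 - \<sigma>2"
      have "w t = 0" by (rule vandermonde_unique[OF f1 _ W]) (use c1 t in auto)
      then have "l t = 0" using t by (simp add: w_def)
      moreover have "s - t \<noteq> 0" using lt t by force
      ultimately show "c t = 0" using dp by (simp add: l_def)
    qed
  qed
  have sub: "insert s (\<sigma>1 \<inter> \<sigma>2) \<subseteq> insert s \<sigma>1" by auto
  have rr: "(\<Sum>t\<in>insert s \<sigma>1. c t * g t) = (\<Sum>t\<in>insert s (\<sigma>1 \<inter> \<sigma>2). c t * g t)" for g :: "real \<Rightarrow> real"
  proof (rule sum.mono_neutral_right)
    show "finite (insert s \<sigma>1)" using f1 by simp
    show "insert s (\<sigma>1 \<inter> \<sigma>2) \<subseteq> insert s \<sigma>1" by blast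
    show "\<forall>i\<in>insert s \<sigma>1 - insert s (\<sigma>1 \<inter> \<sigma>2). c i * g i = 0" using cz by simp
  qed
  have "y = (\<lambda>i. \<Sum>t\<in>insert s (\<sigma>1 \<inter> \<sigma>2). c t * moment (Suc D) t i)" unfolding y using rr by simp
  moreover have "(\<Sum>t\<in>insert s (\<sigma>1 \<inter> \<sigma>2). c t) = 1" using rr[of "\<lambda>_. 1"] c by simp
  moreover have "\<forall>t\<in>insert s (\<sigma>1 \<inter> \<sigma>2). 0 \<le> c t" using c by auto
  ultimately show "y \<in> conv_mc (Suc D) (insert s (\<sigma>1 \<inter> \<sigma>2))" by (auto simp: conv_mc_def)
qed


theorem proposition4p3:
  fixes D n :: nat and F :: "real set set"
  assumes "D \<ge> 1"
    and "\<forall>\<sigma>\<in>F. is_simplex D \<sigma>"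
    and "pairwise_nonoverlapping D F"
    and "finite (\<Union>F)" and "card (\<Union>F) = n"
    and "non_extendable D F"
  shows "\<exists>F' :: real set set. (\<forall>\<sigma>\<in>F'. is_simplex (D + 1) \<sigma>)
            \<and> pairwise_nonoverlapping (D + 1) F'
            \<and> finite (\<Union>F') \<and> card (\<Union>F') = n + 1
            \<and> non_extendable (D + 1) F'"
proof -
  define A where "A = \<Union>F"
  have fA: "finite A" using assms(4) by (simp add: A_def)
  have Fne: "F \<noteq> {}"
  proof
    assume "F = {}"
    then have "triangulation D (\<Union>F) {} \<and> F \<subseteq> {}"
      by (simp add: triangulation_def pairwise_nonoverlapping_def conv_mc_def)
    then show False using assms(6) unfolding non_extendable_def by blast
  qed
  then obtain \<sigma>0 where s0: "\<sigma>0 \<in> F" by auto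
  have "card \<sigma>0 = D + 1" using assms(2) s0 by (simp add: is_simplex_def)
  then have "\<sigma>0 \<noteq> {}" by auto
  then have Ane: "A \<noteq> {}" using s0 by (auto simp: A_def)
  define s where "s = Max A + 1"
  have le: "\<forall>t\<in>A. t \<le> s - 1" using fA by (simp add: s_def)
  have sA: "s \<notin> A"
  proof
    assume "s \<in> A"
    then have "s \<le> s - 1" using le by blast
    then show False by simp
  qed
  have fin\<sigma>: "\<And>\<sigma>. \<sigma> \<in> F \<Longrightarrow> finite \<sigma> \<and> card \<sigma> = Suc D" using assms(2) by (simp add: is_simplex_def)
  have sub\<sigma>: "\<And>\<sigma>. \<sigma> \<in> F \<Longrightarrow> \<sigma> \<subseteq> A" by (auto simp: A_def)
  define F' where "F' = insert s ` F"
  have UF': "\<Union>F' = insert s A" using Fne by (auto simp: F'_def A_def)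
  have simp': "\<forall>\<sigma>\<in>F'. is_simplex (D + 1) \<sigma>"
  proof
    fix \<tau> assume "\<tau> \<in> F'"
    then obtain \<sigma> where "\<sigma> \<in> F" "\<tau> = insert s \<sigma>" by (auto simp: F'_def)
    moreover have "s \<notin> \<sigma>" using sA sub\<sigma> \<open>\<sigma> \<in> F\<close> by auto
    ultimately show "is_simplex (D + 1) \<tau>" using fin\<sigma> by (simp add: is_simplex_def)
  qed
  have pw': "pairwise_nonoverlapping (D + 1) F'"
    unfolding pairwise_nonoverlapping_def
  proof (intro ballI impI)
    fix \<tau>1 \<tau>2 assume t1: "\<tau>1 \<in> F'" and t2: "\<tau>2 \<in> F'" and ne: "\<tau>1 \<noteq> \<tau>2"
    obtain \<sigma>1 where a1: "\<sigma>1 \<in> F" "\<tau>1 = insert s \<sigma>1" using t1 by (auto simp: F'_def)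
    obtain \<sigma>2 where a2: "\<sigma>2 \<in> F" "\<tau>2 = insert s \<sigma>2" using t2 by (auto simp: F'_def)
    have ns: "\<sigma>1 \<noteq> \<sigma>2" using ne a1 a2 by auto
    have f1: "finite \<sigma>1" "card \<sigma>1 = Suc D" and f2: "finite \<sigma>2" using fin\<sigma> a1 a2 by auto
    have ss: "s \<notin> \<sigma>1" "s \<notin> \<sigma>2" using sA sub\<sigma> a1 a2 by auto
    have lt: "\<forall>t\<in>\<sigma>1 \<union> \<sigma>2. t < s"
    proof
      fix t assume "t \<in> \<sigma>1 \<union> \<sigma>2"
      then have "t \<in> A" using sub\<sigma> a1(1) a2(1) by blast
      then have "t \<le> s - 1" using le by blast
      then show "t < s" by simp
    qed
    have "\<not> overlap D \<sigma>1 \<sigma>2" using assms(3) a1 a2 ns by (auto simp: pairwise_nonoverlapping_def)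
    then have nov: "conv_mc D \<sigma>1 \<inter> conv_mc D \<sigma>2 \<subseteq> conv_mc D (\<sigma>1 \<inter> \<sigma>2)"
      using not_overlap_iff f1 f2 by blast
    have "conv_mc (Suc D) \<tau>1 \<inter> conv_mc (Suc D) \<tau>2 \<subseteq> conv_mc (Suc D) (\<tau>1 \<inter> \<tau>2)"
    proof -
      have "\<tau>1 \<inter> \<tau>2 = insert s (\<sigma>1 \<inter> \<sigma>2)" using a1 a2 by auto
      then show ?thesis using nonov_cone[OF f1(1) f2 f1(2) ss lt nov] a1 a2 by simp
    qed
    then show "\<not> overlap (D + 1) \<tau>1 \<tau>2"
      using not_overlap_iff[of \<tau>1 \<tau>2 "Suc D"] f1 f2 a1 a2 by simp
  qed
  have ne': "non_extendable (D + 1) F'"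
    unfolding non_extendable_def
  proof
    assume "\<exists>T. triangulation (D + 1) (\<Union>F') T \<and> F' \<subseteq> T"
    then obtain T' where tr: "triangulation (Suc D) (insert s A) T'" and FT: "F' \<subseteq> T'"
      using UF' by auto
    have fT': "finite T'" and simT': "\<forall>\<tau>\<in>T'. finite \<tau> \<and> card \<tau> = D + 2 \<and> \<tau> \<subseteq> insert s A"
      and pwT': "pairwise_nonoverlapping (Suc D) T'"
      and cvT': "(\<Union>\<tau>\<in>T'. conv_mc (Suc D) \<tau>) = conv_mc (Suc D) (insert s A)"
      using tr by (auto simp: triangulation_def is_simplex_def)
    define T where "T = (\<lambda>\<tau>. \<tau> - {s}) ` {\<tau>\<in>T'. s \<in> \<tau>}"
    have leS: "\<forall>t\<in>insert s A. t \<le> s" using le by auto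
    have FT2: "F \<subseteq> T"
    proof
      fix \<sigma> assume "\<sigma> \<in> F"
      then have "insert s \<sigma> \<in> T'" "s \<notin> \<sigma>" using FT sA sub\<sigma> by (auto simp: F'_def)
      then show "\<sigma> \<in> T" unfolding T_def by (intro image_eqI[of _ _ "insert s \<sigma>"]) auto
    qed
    have "triangulation D A T"
      unfolding triangulation_def
    proof (intro conjI)
      show "finite T" using fT' by (simp add: T_def)
      show "\<forall>\<sigma>\<in>T. is_simplex D \<sigma> \<and> \<sigma> \<subseteq> A"
      proof
        fix \<sigma> assume "\<sigma> \<in> T"
        then obtain \<tau> where a: "\<tau> \<in> T'" "s \<in> \<tau>" "\<sigma> = \<tau> - {s}" by (auto simp: T_def)
        have "finite \<tau>" "card \<tau> = D + 2" "\<tau> \<subseteq> insert s A" using simT' a(1) by blast+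
        then show "is_simplex D \<sigma> \<and> \<sigma> \<subseteq> A" using a(2,3) by (auto simp: is_simplex_def)
      qed
      show "pairwise_nonoverlapping D T"
        unfolding pairwise_nonoverlapping_def
      proof (intro ballI impI)
        fix \<sigma>1 \<sigma>2 assume "\<sigma>1 \<in> T" "\<sigma>2 \<in> T" and ne: "\<sigma>1 \<noteq> \<sigma>2"
        then obtain \<tau>1 \<tau>2 where a: "\<tau>1 \<in> T'" "s \<in> \<tau>1" "\<sigma>1 = \<tau>1 - {s}" "\<tau>2 \<in> T'" "s \<in> \<tau>2" "\<sigma>2 = \<tau>2 - {s}"
          by (auto simp: T_def)
        have tne: "\<tau>1 \<noteq> \<tau>2" using a ne by auto
        have fin: "finite \<tau>1" "finite \<tau>2" "finite \<sigma>1" "finite \<sigma>2" using simT' a by auto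
        have subA: "\<sigma>1 \<subseteq> A" "\<sigma>2 \<subseteq> A" using simT' a by auto
        have "\<not> overlap (Suc D) \<tau>1 \<tau>2" using pwT' a tne by (auto simp: pairwise_nonoverlapping_def)
        then have novT: "conv_mc (Suc D) \<tau>1 \<inter> conv_mc (Suc D) \<tau>2 \<subseteq> conv_mc (Suc D) (\<tau>1 \<inter> \<tau>2)"
          using not_overlap_iff fin by blast
        have "conv_mc D \<sigma>1 \<inter> conv_mc D \<sigma>2 \<subseteq> conv_mc D (\<sigma>1 \<inter> \<sigma>2)"
        proof
          fix x assume x: "x \<in> conv_mc D \<sigma>1 \<inter> conv_mc D \<sigma>2"
          have le1: "\<forall>t\<in>\<sigma>1. t \<le> s - 1" "\<forall>t\<in>\<sigma>2. t \<le> s - 1" using subA le by blast+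
          have sn: "s \<notin> \<sigma>1" "s \<notin> \<sigma>2" using a(3,6) by blast+
          have x1: "x \<in> conv_mc D \<sigma>1" and x2: "x \<in> conv_mc D \<sigma>2" using x by blast+
          obtain y1 where y1: "y1 \<in> conv_mc (Suc D) (insert s \<sigma>1)" "y1 1 = s - 1/2" "phi D s (1/2) y1 = x"
            using lift[OF fin(3) sn(1) le1(1) _ _ x1, of "1/2"] by force
          obtain y2 where y2: "y2 \<in> conv_mc (Suc D) (insert s \<sigma>2)" "y2 1 = s - 1/2" "phi D s (1/2) y2 = x"
            using lift[OF fin(4) sn(2) le1(2) _ _ x2, of "1/2"] by force
          have "y1 = y2" by (rule determ[OF y1(1) y2(1), of s "1/2"]) (use y1 y2 in simp_all)
          have eq1: "insert s \<sigma>1 = \<tau>1" using a(2,3) by blast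
          have eq2: "insert s \<sigma>2 = \<tau>2" using a(5,6) by blast
          have "y1 \<in> conv_mc (Suc D) \<tau>1" using y1(1) eq1 by simp
          moreover have "y1 \<in> conv_mc (Suc D) \<tau>2" using y2(1) eq2 \<open>y1 = y2\<close> by simp
          ultimately have yi: "y1 \<in> conv_mc (Suc D) (\<tau>1 \<inter> \<tau>2)" using novT by blast
          have fi: "finite (\<tau>1 \<inter> \<tau>2)" using fin(1) by simp
          have si: "s \<in> \<tau>1 \<inter> \<tau>2" using a(2,5) by simp
          have li: "\<forall>t\<in>\<tau>1 \<inter> \<tau>2. t \<le> s" using simT' a(1) leS by blast
          have "phi D s (1/2) y1 \<in> conv_mc D ((\<tau>1 \<inter> \<tau>2) - {s})"
            by (rule recover[OF fi si li _ yi]) (use y1(2) in simp_all)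
          moreover have "(\<tau>1 \<inter> \<tau>2) - {s} = \<sigma>1 \<inter> \<sigma>2" using a(3,6) by blast
          ultimately show "x \<in> conv_mc D (\<sigma>1 \<inter> \<sigma>2)" using y1 by simp
        qed
        then show "\<not> overlap D \<sigma>1 \<sigma>2" using not_overlap_iff fin by blast
      qed
      show "(\<Union>\<sigma>\<in>T. conv_mc D \<sigma>) = conv_mc D A"
      proof
        show "(\<Union>\<sigma>\<in>T. conv_mc D \<sigma>) \<subseteq> conv_mc D A"
        proof
          fix x assume "x \<in> (\<Union>\<sigma>\<in>T. conv_mc D \<sigma>)"
          then obtain \<sigma> where "\<sigma> \<in> T" "x \<in> conv_mc D \<sigma>" by blast
          then obtain \<tau> where a: "\<tau> \<in> T'" "\<sigma> = \<tau> - {s}" by (auto simp: T_def)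
          have "\<tau> \<subseteq> insert s A" using simT' a(1) by blast
          then have "\<sigma> \<subseteq> A" using a(2) by blast
          then show "x \<in> conv_mc D A" using conv_mono[OF fA] \<open>x \<in> conv_mc D \<sigma>\<close> by blast
        qed
        show "conv_mc D A \<subseteq> (\<Union>\<sigma>\<in>T. conv_mc D \<sigma>)"
        proof
          fix x assume x: "x \<in> conv_mc D A"
          obtain y where y: "y \<in> conv_mc (Suc D) (insert s A)" "y 1 = s - 1/2" "phi D s (1/2) y = x"
            using lift[OF fA sA le _ _ x, of "1/2"] by force
          then obtain \<tau> where \<tau>: "\<tau> \<in> T'" "y \<in> conv_mc (Suc D) \<tau>" using cvT' by blast
          have s\<tau>: "s \<in> \<tau>"
          proof (rule ccontr)
            assume "s \<notin> \<tau>"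
            have "\<forall>t\<in>\<tau>. t \<le> s - 1"
            proof
              fix t assume t: "t \<in> \<tau>"
              then have "t \<in> insert s A" using simT' \<tau>(1) by blast
              then have "t \<in> A" using t \<open>s \<notin> \<tau>\<close> by auto
              then show "t \<le> s - 1" using le by blast
            qed
            then have "y 1 \<le> s - 1" using conv_first_le \<tau>(2) by blast
            then show False using y(2) by simp
          qed
          have "phi D s (1/2) y \<in> conv_mc D (\<tau> - {s})"
          proof (rule recover)
            show "finite \<tau>" using simT' \<tau>(1) by blast
            show "\<forall>t\<in>\<tau>. t \<le> s" using simT' \<tau>(1) leS by blast
          qed (use s\<tau> \<tau>(2) y(2) in simp_all)
          moreover have "\<tau> - {s} \<in> T" using \<tau> s\<tau> by (auto simp: T_def)
          ultimately show "x \<in> (\<Union>\<sigma>\<in>T. conv_mc D \<sigma>)" using y by auto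
        qed
      qed
    qed
    then show False using FT2 assms(6) unfolding non_extendable_def A_def by blast
  qed
  have "finite (\<Union>F')" "card (\<Union>F') = n + 1" using UF' fA sA assms(5) by (auto simp: A_def)
  then show ?thesis using simp' pw' ne' by blast
qed

end
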